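(* There exist constants $c<\infty$ and $b>0$, independent of $N$, such that for every positive integer $N$, every $x\in[-N,N]$ and every $t\ge 0$, $$E_x\big[e^{-T^*(t)}\big]\le c\,e^{-bN^{-2}t}.$$
   Context: For a positive integer $N$, let $(x_s)_{s\ge0}$ be the continuous-time random walk on $[-N,N]\cap\mathbb Z$ which jumps from $y$ to each neighbour $y\pm1$ lying in $[-N,N]$ at rate $1/2$ (jumps out of $[-N,N]$ are suppressed); $E_x$ denotes expectation for this walk started at $x$. Let $T^*(t)=\int_0^t(\mathbf 1_{x_s=N}+\mathbf 1_{x_s=-N})\,ds$ be the time spent in $\{-N,N\}$ during $[0,t]$. *)

theory Defs
  imports "HOL-Probability.Probability"
begin

text \<open>Construction of the continuous-time random walk on [-N,N] by uniformization:
  the total jump-attempt rate is 1; i.i.d. Exp(1) holding times and i.i.d. fair coins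
  choose a proposed neighbour y+1 or y-1 (each therefore at rate 1/2); proposals leaving
  [-N,N] are suppressed (the walk stays put).\<close>

definition exp_meas :: "real measure" where
  "exp_meas = density lborel (exponential_density 1)"

definition step_meas :: "(real \<times> bool) measure" where
  "step_meas = exp_meas \<Otimes>\<^sub>M measure_pmf (bernoulli_pmf (1/2))"

definition walk_space :: "(nat \<Rightarrow> real \<times> bool) measure" where
  "walk_space = PiM UNIV (\<lambda>_. step_meas)"

fun jump_chain :: "nat \<Rightarrow> int \<Rightarrow> (nat \<Rightarrow> real \<times> bool) \<Rightarrow> nat \<Rightarrow> int" where
  "jump_chain N x \<omega> 0 = x"
| "jump_chain N x \<omega> (Suc n) =
     (let y = jump_chain N x \<omega> n in
      if snd (\<omega> n) then (if y + 1 \<le> int N then y + 1 else y)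
      else (if - int N \<le> y - 1 then y - 1 else y))"

text \<open>Number of jump attempts in [0,s]: the k-th attempt (k = 0,1,...) happens at
  time of the sum of the first k+1 holding times.\<close>
definition njumps :: "(nat \<Rightarrow> real \<times> bool) \<Rightarrow> real \<Rightarrow> nat" where
  "njumps \<omega> s = card {k::nat. (\<Sum>i\<le>k. fst (\<omega> i)) \<le> s}"

definition walk_pos :: "nat \<Rightarrow> int \<Rightarrow> (nat \<Rightarrow> real \<times> bool) \<Rightarrow> real \<Rightarrow> int" where
  "walk_pos N x \<omega> s = jump_chain N x \<omega> (njumps \<omega> s)"

definition Tstar :: "nat \<Rightarrow> int \<Rightarrow> real \<Rightarrow> (nat \<Rightarrow> real \<times> bool) \<Rightarrow> real" where
  "Tstar N x t \<omega> =
     (LINT s:{0..t}|lborel. (if walk_pos N x \<omega> s = int N \<or> walk_pos N x \<omega> s = - int N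
                             then 1 else 0))"

end

theory Submission imports Defs begin

lemma prob_exp: "prob_space exp_meas"
  unfolding exp_meas_def by (rule prob_space_exponential_density) simp

lemma prob_step: "prob_space step_meas"
proof -
  interpret E: prob_space exp_meas by (rule prob_exp)
  interpret B: prob_space "measure_pmf (bernoulli_pmf (1/2))" by (rule prob_space_measure_pmf)
  interpret P: pair_prob_space exp_meas "measure_pmf (bernoulli_pmf (1/2))" ..
  show ?thesis unfolding step_meas_def by (rule P.prob_space_axioms)
qed

interpretation SS: sequence_space step_meas
  by (simp add: sequence_space_def product_prob_space_def product_prob_space_axioms_def
      product_sigma_finite_def prob_step prob_space_imp_sigma_finite)

lemma W_eq: "walk_space = SS.S" unfolding walk_space_def by simp

definition nxt :: "nat \<Rightarrow> int \<Rightarrow> bool \<Rightarrow> int" where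
  "nxt N y b = (if b then (if y + 1 \<le> int N then y + 1 else y)
      else (if - int N \<le> y - 1 then y - 1 else y))"

lemma jc_Suc: "jump_chain N x \<omega> (Suc n) = nxt N (jump_chain N x \<omega> n) (snd (\<omega> n))"
  by (simp add: nxt_def Let_def)

lemma jc_shift: "jump_chain N x \<omega> (Suc n) = jump_chain N (nxt N x (snd (\<omega> 0))) (\<lambda>i. \<omega> (Suc i)) n"
  by (induction n) (simp_all only: jc_Suc jump_chain.simps(1))

lemma nxt_range: "- int N \<le> y \<Longrightarrow> y \<le> int N \<Longrightarrow> - int N \<le> nxt N y b \<and> nxt N y b \<le> int N"
  by (auto simp: nxt_def)

lemma jc_range: "- int N \<le> x \<Longrightarrow> x \<le> int N \<Longrightarrow> - int N \<le> jump_chain N x \<omega> n \<and> jump_chain N x \<omega> n \<le> int N"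
  using nxt_range by (induction n) (auto simp del: jump_chain.simps(2) simp: jc_Suc)

lemma sets_step: "sets step_meas = sets (borel \<Otimes>\<^sub>M count_space UNIV)"
  unfolding step_meas_def exp_meas_def
  by (intro sets_pair_measure_cong) auto

lemma meas_snd_step: "(\<lambda>s. snd s) \<in> step_meas \<rightarrow>\<^sub>M count_space UNIV"
  by (subst measurable_cong_sets[OF sets_step refl]) simp

lemma meas_jc: "(\<lambda>\<omega>. jump_chain N x \<omega> n) \<in> walk_space \<rightarrow>\<^sub>M count_space UNIV"
proof (induction n)
  case 0 then show ?case by simp
next
  case (Suc n)
  have "(\<lambda>\<omega>. (\<lambda>y \<omega>. nxt N y (snd (\<omega> n))) (jump_chain N x \<omega> n) \<omega>) \<in> walk_space \<rightarrow>\<^sub>M count_space UNIV"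
  proof (rule measurable_compose_countable[OF _ Suc])
    fix y
    have "(\<lambda>\<omega>. snd (\<omega> n)) \<in> walk_space \<rightarrow>\<^sub>M count_space UNIV"
    proof (rule measurable_compose[OF _ meas_snd_step])
      show "(\<lambda>\<omega>. \<omega> n) \<in> walk_space \<rightarrow>\<^sub>M step_meas"
        unfolding walk_space_def by (rule measurable_component_singleton) simp
    qed
    then show "(\<lambda>\<omega>. nxt N y (snd (\<omega> n))) \<in> walk_space \<rightarrow>\<^sub>M count_space UNIV"
      by (rule measurable_compose) simp
  qed
  then show ?case by (simp only: jc_Suc)
qed

definition Fw :: "nat \<Rightarrow> (int \<Rightarrow> real \<times> bool \<Rightarrow> real) \<Rightarrow> (int \<Rightarrow> real) \<Rightarrow> nat \<Rightarrow> int \<Rightarrow> (nat \<Rightarrow> real \<times> bool) \<Rightarrow> real" where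
  "Fw N \<phi> H M x \<omega> = (\<Prod>n<M. \<phi> (jump_chain N x \<omega> n) (\<omega> n)) * H (jump_chain N x \<omega> M)"

lemma Fw_Suc: "Fw N \<phi> H (Suc M) x (case_nat s \<omega>) = \<phi> x s * Fw N \<phi> H M (nxt N x (snd s)) \<omega>"
proof -
  have e: "(\<lambda>i. case_nat s \<omega> (Suc i)) = \<omega>" by simp
  show ?thesis
    unfolding Fw_def prod.lessThan_Suc_shift
    by (simp del: jump_chain.simps(2) add: jc_shift e mult.assoc)
qed

lemma Fw_meas:
  assumes "\<And>y. \<phi> y \<in> borel_measurable step_meas"
  shows "Fw N \<phi> H M x \<in> borel_measurable walk_space"
proof -
  have c: "(\<lambda>\<omega>. \<omega> n) \<in> walk_space \<rightarrow>\<^sub>M step_meas" for n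
    unfolding walk_space_def by (rule measurable_component_singleton) simp
  have f: "(\<lambda>\<omega>. \<phi> (jump_chain N x \<omega> n) (\<omega> n)) \<in> borel_measurable walk_space" for n
  proof (rule measurable_compose_countable[OF _ meas_jc])
    fix y show "(\<lambda>\<omega>. \<phi> y (\<omega> n)) \<in> borel_measurable walk_space"
      by (rule measurable_compose[OF c assms])
  qed
  have h: "(\<lambda>\<omega>. H (jump_chain N x \<omega> M)) \<in> borel_measurable walk_space"
    by (rule measurable_compose_countable[OF _ meas_jc]) simp
  show ?thesis unfolding Fw_def[abs_def]
    by (intro borel_measurable_times borel_measurable_prod f h)
qed

lemma iter:
  assumes meas: "\<And>y. \<phi> y \<in> borel_measurable step_meas"
    and pnn: "\<And>y s. 0 \<le> \<phi> y s" and Hnn: "\<And>y. 0 \<le> H y" and q: "0 \<le> q"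
    and bound: "\<And>y. - int N \<le> y \<Longrightarrow> y \<le> int N \<Longrightarrow>
       (\<integral>\<^sup>+s. ennreal (\<phi> y s * H (nxt N y (snd s))) \<partial>step_meas) \<le> ennreal (q * H y)"
  shows "- int N \<le> x \<Longrightarrow> x \<le> int N \<Longrightarrow>
     (\<integral>\<^sup>+\<omega>. ennreal (Fw N \<phi> H M x \<omega>) \<partial>walk_space) \<le> ennreal (q^M * H x)"
proof (induction M arbitrary: x)
  case 0
  interpret W: prob_space walk_space unfolding W_eq by (rule SS.prob_space_axioms)
  show ?case by (simp add: Fw_def W.emeasure_space_1)
next
  case (Suc M)
  interpret PS: pair_sigma_finite step_meas SS.S
    by (intro pair_sigma_finite.intro prob_space_imp_sigma_finite prob_step SS.prob_space_axioms)
  have mF: "\<And>M x. Fw N \<phi> H M x \<in> borel_measurable SS.S"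
    using Fw_meas[OF meas] unfolding W_eq .
  have mc: "(\<lambda>(s, \<omega>). case_nat s \<omega>) \<in> step_meas \<Otimes>\<^sub>M SS.S \<rightarrow>\<^sub>M SS.S"
    by measurable
  have "(\<integral>\<^sup>+\<omega>. ennreal (Fw N \<phi> H (Suc M) x \<omega>) \<partial>walk_space)
      = (\<integral>\<^sup>+\<omega>. ennreal (Fw N \<phi> H (Suc M) x \<omega>) \<partial>distr (step_meas \<Otimes>\<^sub>M SS.S) SS.S (\<lambda>(s, \<omega>). case_nat s \<omega>))"
    unfolding W_eq SS.PiM_iter ..
  also have "\<dots> = (\<integral>\<^sup>+p. ennreal (Fw N \<phi> H (Suc M) x ((\<lambda>(s, \<omega>). case_nat s \<omega>) p)) \<partial>(step_meas \<Otimes>\<^sub>M SS.S))"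
    by (rule nn_integral_distr[OF mc]) (use mF in measurable)
  also have "\<dots> = (\<integral>\<^sup>+s. \<integral>\<^sup>+\<omega>. ennreal (Fw N \<phi> H (Suc M) x (case_nat s \<omega>)) \<partial>SS.S \<partial>step_meas)"
  proof -
    have m2: "(\<lambda>p. ennreal (Fw N \<phi> H (Suc M) x ((\<lambda>(s, \<omega>). case_nat s \<omega>) p))) \<in> borel_measurable (step_meas \<Otimes>\<^sub>M SS.S)"
      using measurable_compose[OF mc mF] by measurable
    show ?thesis using sigma_finite_measure.nn_integral_fst[OF prob_space_imp_sigma_finite[OF SS.prob_space_axioms] m2] by simp
  qed
  also have "\<dots> = (\<integral>\<^sup>+s. ennreal (\<phi> x s) * \<integral>\<^sup>+\<omega>. ennreal (Fw N \<phi> H M (nxt N x (snd s)) \<omega>) \<partial>SS.S \<partial>step_meas)"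
    by (intro nn_integral_cong, subst nn_integral_cmult[symmetric])
       (auto simp: Fw_Suc ennreal_mult' pnn intro: measurable_compose[OF mF])
  also have "\<dots> \<le> (\<integral>\<^sup>+s. ennreal (\<phi> x s) * ennreal (q^M * H (nxt N x (snd s))) \<partial>step_meas)"
    using Suc.IH[unfolded W_eq] nxt_range[OF Suc.prems]
    by (intro nn_integral_mono mult_left_mono) auto
  also have "\<dots> = (\<integral>\<^sup>+s. ennreal (q^M) * ennreal (\<phi> x s * H (nxt N x (snd s))) \<partial>step_meas)"
    by (intro nn_integral_cong) (simp add: ennreal_mult'[symmetric] pnn Hnn q mult_ac)
  also have "\<dots> = ennreal (q^M) * (\<integral>\<^sup>+s. ennreal (\<phi> x s * H (nxt N x (snd s))) \<partial>step_meas)"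
  proof (rule nn_integral_cmult)
    have "(\<lambda>s. H (nxt N x (snd s))) \<in> borel_measurable step_meas"
      by (rule measurable_compose[OF meas_snd_step]) simp
    then show "(\<lambda>s. ennreal (\<phi> x s * H (nxt N x (snd s)))) \<in> borel_measurable step_meas"
      using meas by measurable
  qed
  also have "\<dots> \<le> ennreal (q^M) * ennreal (q * H x)"
    by (intro mult_left_mono bound Suc.prems) auto
  also have "\<dots> = ennreal (q^Suc M * H x)"
    by (simp add: ennreal_mult'[symmetric] q Hnn mult_ac)
  finally show ?case .
qed

lemma int_exp_density: "0 < l \<Longrightarrow> (\<integral>\<^sup>+\<tau>. ennreal (exponential_density l \<tau>) \<partial>lborel) = 1"
proof -
  assume l: "0 < l"
  interpret D: prob_space "density lborel (exponential_density l)"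
    by (rule prob_space_exponential_density[OF l])
  have "1 = emeasure (density lborel (exponential_density l)) UNIV"
    using D.emeasure_space_1 by simp
  also have "\<dots> = (\<integral>\<^sup>+\<tau>. ennreal (exponential_density l \<tau>) \<partial>lborel)"
    by (subst emeasure_density) auto
  finally show ?thesis by simp
qed

lemma exp_int:
  assumes a: "-1 < a"
  shows "(\<integral>\<^sup>+\<tau>. ennreal (exp (- max \<tau> 0 * a)) \<partial>exp_meas) = ennreal (1 / (1 + a))"
proof -
  have "(\<integral>\<^sup>+\<tau>. ennreal (exp (- max \<tau> 0 * a)) \<partial>exp_meas)
      = (\<integral>\<^sup>+\<tau>. ennreal (exponential_density 1 \<tau>) * ennreal (exp (- max \<tau> 0 * a)) \<partial>lborel)"
    unfolding exp_meas_def by (subst nn_integral_density) auto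
  also have "\<dots> = (\<integral>\<^sup>+\<tau>. ennreal (1 / (1 + a)) * ennreal (exponential_density (1 + a) \<tau>) \<partial>lborel)"
  proof (intro nn_integral_cong)
    fix \<tau> :: real
    show "ennreal (exponential_density 1 \<tau>) * ennreal (exp (- max \<tau> 0 * a))
        = ennreal (1 / (1 + a)) * ennreal (exponential_density (1 + a) \<tau>)"
    proof (cases "\<tau> < 0")
      case True then show ?thesis by (simp add: exponential_density_def)
    next
      case False
      have "- \<tau> * (1 + a) = - \<tau> + (- \<tau> * a)" by algebra
      then have e: "exp (- \<tau> * (1 + a)) = exp (- \<tau>) * exp (- \<tau> * a)"
        by (simp only: exp_add)
      have m: "max \<tau> 0 = \<tau>" using False by simp
      have "exp (- \<tau>) * exp (- max \<tau> 0 * a) = exp (- \<tau> * (1 + a))"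
        by (simp only: m e)
      also have "\<dots> = 1 / (1 + a) * ((1 + a) * exp (- \<tau> * (1 + a)))" using a by simp
      finally have "exp (- \<tau>) * exp (- max \<tau> 0 * a) = 1 / (1 + a) * ((1 + a) * exp (- \<tau> * (1 + a)))" .
      then show ?thesis using False a
        by (simp add: exponential_density_def ennreal_mult'[symmetric])
    qed
  qed
  also have "\<dots> = ennreal (1 / (1 + a))"
    using a by (subst nn_integral_cmult) (auto simp: int_exp_density)
  finally show ?thesis .
qed

lemma step_int:
  assumes f: "f \<in> borel_measurable borel" and fnn: "\<And>x. 0 \<le> f x" and gnn: "\<And>b. 0 \<le> g b"
  shows "(\<integral>\<^sup>+s. ennreal (f (fst s) * g (snd s)) \<partial>step_meas)
     = (\<integral>\<^sup>+\<tau>. ennreal (f \<tau>) \<partial>exp_meas) * ennreal ((g True + g False) / 2)"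
proof -
  interpret E: prob_space exp_meas by (rule prob_exp)
  interpret B: prob_space "measure_pmf (bernoulli_pmf (1/2))" by (rule prob_space_measure_pmf)
  interpret P: pair_prob_space exp_meas "measure_pmf (bernoulli_pmf (1/2))" ..
  have m: "(\<lambda>s. ennreal (f (fst s) * g (snd s))) \<in> borel_measurable (exp_meas \<Otimes>\<^sub>M measure_pmf (bernoulli_pmf (1/2)))"
  proof -
    have s1: "sets exp_meas = sets borel" unfolding exp_meas_def by simp
    have "(\<lambda>s. f (fst s)) \<in> borel_measurable (exp_meas \<Otimes>\<^sub>M measure_pmf (bernoulli_pmf (1/2)))"
      by (rule measurable_compose[OF measurable_fst]) (simp add: measurable_cong_sets[OF s1 refl] f)
    moreover have "(\<lambda>s. g (snd s)) \<in> borel_measurable (exp_meas \<Otimes>\<^sub>M measure_pmf (bernoulli_pmf (1/2)))"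
      by (rule measurable_compose[OF measurable_snd]) simp
    ultimately show ?thesis by measurable
  qed
  have "(\<integral>\<^sup>+s. ennreal (f (fst s) * g (snd s)) \<partial>step_meas)
     = (\<integral>\<^sup>+\<tau>. \<integral>\<^sup>+c. ennreal (f \<tau> * g c) \<partial>measure_pmf (bernoulli_pmf (1/2)) \<partial>exp_meas)"
    unfolding step_meas_def using sigma_finite_measure.nn_integral_fst[OF prob_space_imp_sigma_finite[OF prob_space_measure_pmf] m] by simp
  also have "\<dots> = (\<integral>\<^sup>+\<tau>. ennreal (f \<tau>) * ennreal ((g True + g False) / 2) \<partial>exp_meas)"
  proof (intro nn_integral_cong)
    fix \<tau>
    show "(\<integral>\<^sup>+c. ennreal (f \<tau> * g c) \<partial>measure_pmf (bernoulli_pmf (1/2)))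
       = ennreal (f \<tau>) * ennreal ((g True + g False) / 2)"
    proof -
      have "(\<integral>\<^sup>+c. ennreal (f \<tau> * g c) \<partial>measure_pmf (bernoulli_pmf (1/2)))
         = ennreal (f \<tau> * g True) * ennreal (1/2) + ennreal (f \<tau> * g False) * ennreal (1 - 1/2)"
        using fnn gnn by (subst nn_integral_bernoulli_pmf) auto
      also have "\<dots> = ennreal (f \<tau> * g True * (1/2) + f \<tau> * g False * (1/2))"
      proof -
        have h: "ennreal y * inverse 2 = ennreal (y / 2)" if "0 \<le> y" for y :: real
          using ennreal_divide_numeral[OF that, of "Num.Bit0 Num.One"] by (simp add: divide_ennreal_def)
        show ?thesis
          using fnn[of \<tau>] gnn[of True] gnn[of False]
          by (simp add: h ennreal_plus[symmetric] del: ennreal_plus)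
      qed
      also have "\<dots> = ennreal (f \<tau>) * ennreal ((g True + g False) / 2)"
        using fnn[of \<tau>] by (simp add: ennreal_mult'[symmetric] algebra_simps add_divide_distrib)
      finally show ?thesis .
    qed
  qed
  also have "\<dots> = (\<integral>\<^sup>+\<tau>. ennreal (f \<tau>) \<partial>exp_meas) * ennreal ((g True + g False) / 2)"
    by (rule nn_integral_multc) (use f in \<open>simp add: exp_meas_def measurable_cong_sets[OF sets_density refl]\<close>)
  finally show ?thesis .
qed

definition bdi :: "nat \<Rightarrow> int \<Rightarrow> real" where
  "bdi N y = (if y = int N \<or> y = - int N then 1 else 0)"

definition phi1 :: "nat \<Rightarrow> int \<Rightarrow> real \<times> bool \<Rightarrow> real" where
  "phi1 N y s = exp (- max (fst s) 0 * bdi N y)"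

definition H1 :: "nat \<Rightarrow> int \<Rightarrow> real" where
  "H1 N y = max (3 * real N ^ 2 - real_of_int y ^ 2) 0"

definition phi2 :: "int \<Rightarrow> real \<times> bool \<Rightarrow> real" where
  "phi2 y s = exp (- max (fst s) 0 * (- 1/2))"

lemma meas_fstfun: "f \<in> borel_measurable borel \<Longrightarrow> (\<lambda>s. f (fst s)) \<in> borel_measurable step_meas"
  by (subst measurable_cong_sets[OF sets_step refl]) (rule measurable_compose[OF measurable_fst], simp)

lemma real_bound1:
  fixes n y :: real
  assumes n: "1 \<le> n" and y: "- n \<le> y" "y \<le> n"
    and hT: "hT = 3 * n^2 - yT^2" and hF: "hF = 3 * n^2 - yF^2"
    and c: "(\<bar>y\<bar> < n \<and> k = 0 \<and> yT = y + 1 \<and> yF = y - 1) \<or>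
            (k = 1 \<and> ((y = n \<and> yT = n \<and> yF = n - 1) \<or> (y = - n \<and> yT = - n + 1 \<and> yF = - n)))"
  shows "1 / (1 + k) * ((hT + hF) / 2) \<le> (1 - 1 / (3 * n^2)) * (3 * n^2 - y^2)"
proof -
  have n2: "1 \<le> n^2" using n by (simp add: one_le_power)
  have nn: "n \<le> n^2" using n by (simp add: power2_eq_square)
  have yy: "y^2 \<le> n^2" using y by (simp add: abs_le_square_iff[symmetric] abs_le_iff)
  from c show ?thesis
  proof (elim disjE conjE)
    assume a: "\<bar>y\<bar> < n" "k = 0" "yT = y + 1" "yF = y - 1"
    have l: "1 / (1 + k) * ((hT + hF) / 2) = 3 * n^2 - y^2 - 1"
      unfolding hT hF a(2-4) by (simp add: power2_eq_square field_simps)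
    have "(3 * n^2 - y^2) / (3 * n^2) \<le> 1" using n2 yy by (simp add: divide_le_eq_1)
    then have "(1 - 1 / (3 * n^2)) * (3 * n^2 - y^2) \<ge> 3 * n^2 - y^2 - 1"
      by (simp add: algebra_simps)
    then show ?thesis using l by simp
  next
    assume a: "k = 1" "y = n" "yT = n" "yF = n - 1"
    have l: "1 / (1 + k) * ((hT + hF) / 2) = (4 * n^2 + 2 * n - 1) / 4"
      unfolding hT hF a by (simp add: power2_eq_square field_simps)
    have r: "(1 - 1 / (3 * n^2)) * (3 * n^2 - y^2) = 2 * n^2 - 2/3"
      using n n2 \<open>y = n\<close> by (simp add: algebra_simps)
    show ?thesis unfolding l r using n n2 nn by (simp add: field_simps)
  next
    assume a: "k = 1" "y = - n" "yT = - n + 1" "yF = - n"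
    have l: "1 / (1 + k) * ((hT + hF) / 2) = (4 * n^2 + 2 * n - 1) / 4"
      unfolding hT hF a by (simp add: power2_eq_square field_simps)
    have r: "(1 - 1 / (3 * n^2)) * (3 * n^2 - y^2) = 2 * n^2 - 2/3"
      using n n2 \<open>y = - n\<close> by (simp add: algebra_simps)
    show ?thesis unfolding l r using n n2 nn by (simp add: field_simps)
  qed
qed

lemma H1_eq: "- int N \<le> z \<Longrightarrow> z \<le> int N \<Longrightarrow> H1 N z = 3 * real N ^ 2 - real_of_int z ^ 2"
proof -
  assume "- int N \<le> z" "z \<le> int N"
  then have "\<bar>real_of_int z\<bar> \<le> real N" by linarith
  then have "real_of_int z ^ 2 \<le> real N ^ 2" by (simp add: abs_le_square_iff[symmetric])
  then show ?thesis unfolding H1_def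
    by (intro max_absorb1) (use zero_le_power2[of "real N"] in linarith)
qed

lemma H1_ge: "- int N \<le> z \<Longrightarrow> z \<le> int N \<Longrightarrow> 2 * real N ^ 2 \<le> H1 N z"
proof -
  assume a: "- int N \<le> z" "z \<le> int N"
  then have "\<bar>real_of_int z\<bar> \<le> real N" by linarith
  then have "real_of_int z ^ 2 \<le> real N ^ 2" by (simp add: abs_le_square_iff[symmetric])
  then show ?thesis using H1_eq[OF a] by simp
qed

lemma bound1:
  assumes N: "1 \<le> N" and y: "- int N \<le> y" "y \<le> int N"
  shows "(\<integral>\<^sup>+s. ennreal (phi1 N y s * H1 N (nxt N y (snd s))) \<partial>step_meas)
     \<le> ennreal ((1 - 1 / (3 * real N ^ 2)) * H1 N y)"
proof -
  let ?k = "bdi N y"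
  have k: "-1 < ?k" by (simp add: bdi_def)
  have "(\<integral>\<^sup>+s. ennreal (phi1 N y s * H1 N (nxt N y (snd s))) \<partial>step_meas)
     = (\<integral>\<^sup>+s. ennreal ((\<lambda>\<tau>. exp (- max \<tau> 0 * ?k)) (fst s) * (\<lambda>b. H1 N (nxt N y b)) (snd s)) \<partial>step_meas)"
    by (simp add: phi1_def)
  also have "\<dots> = ennreal (1 / (1 + ?k)) * ennreal ((H1 N (nxt N y True) + H1 N (nxt N y False)) / 2)"
    by (subst step_int) (auto simp: exp_int[OF k, simplified] H1_def)
  also have "\<dots> = ennreal (1 / (1 + ?k) * ((H1 N (nxt N y True) + H1 N (nxt N y False)) / 2))"
    using k by (subst ennreal_mult') (auto simp: H1_def bdi_def)
  also have "\<dots> \<le> ennreal ((1 - 1 / (3 * real N ^ 2)) * H1 N y)"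
  proof (rule ennreal_leI)
    have n: "1 \<le> real N" using N by simp
    have yr: "- real N \<le> real_of_int y" "real_of_int y \<le> real N" using y by linarith+
    have c: "(\<bar>real_of_int y\<bar> < real N \<and> ?k = 0 \<and> real_of_int (nxt N y True) = real_of_int y + 1
               \<and> real_of_int (nxt N y False) = real_of_int y - 1) \<or>
            (?k = 1 \<and> ((real_of_int y = real N \<and> real_of_int (nxt N y True) = real N
               \<and> real_of_int (nxt N y False) = real N - 1) \<or>
             (real_of_int y = - real N \<and> real_of_int (nxt N y True) = - real N + 1
               \<and> real_of_int (nxt N y False) = - real N)))"
      using N y by (auto simp: bdi_def nxt_def)
    show "1 / (1 + ?k) * ((H1 N (nxt N y True) + H1 N (nxt N y False)) / 2)
        \<le> (1 - 1 / (3 * real N ^ 2)) * H1 N y"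
      using real_bound1[OF n yr H1_eq[OF nxt_range[OF y, of True, THEN conjunct1] nxt_range[OF y, of True, THEN conjunct2]]
          H1_eq[OF nxt_range[OF y, of False, THEN conjunct1] nxt_range[OF y, of False, THEN conjunct2]] c]
      by (simp add: H1_eq[OF y])
  qed
  finally show ?thesis .
qed

lemma bound2:
  "(\<integral>\<^sup>+s. ennreal (phi2 y s * (\<lambda>_. 1) (nxt N y (snd s))) \<partial>step_meas) \<le> ennreal (2 * (\<lambda>_. 1) y)"
proof -
  have k: "-1 < (-1/2::real)" by simp
  have "(\<integral>\<^sup>+s. ennreal (phi2 y s * (\<lambda>_. 1) (nxt N y (snd s))) \<partial>step_meas)
     = (\<integral>\<^sup>+s. ennreal ((\<lambda>\<tau>. exp (- max \<tau> 0 * (-1/2))) (fst s) * (\<lambda>b. 1) (snd s)) \<partial>step_meas)"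
    by (simp add: phi2_def)
  also have "\<dots> = ennreal (1 / (1 + (-1/2))) * ennreal ((1 + 1) / 2)"
    using exp_int[OF k] by (subst step_int) auto
  finally show ?thesis by simp
qed

definition Sm :: "(nat \<Rightarrow> real \<times> bool) \<Rightarrow> nat \<Rightarrow> real" where
  "Sm \<omega> k = (\<Sum>i<k. fst (\<omega> i))"

lemma Sm_mono: "(\<And>n. 0 \<le> fst (\<omega> n)) \<Longrightarrow> a \<le> b \<Longrightarrow> Sm \<omega> a \<le> Sm \<omega> b"
  unfolding Sm_def by (rule sum_mono2) auto

lemma Sm_nonneg: "(\<And>n. 0 \<le> fst (\<omega> n)) \<Longrightarrow> 0 \<le> Sm \<omega> a"
  unfolding Sm_def by (rule sum_nonneg) auto

lemma sum_atMost_Sm: "(\<Sum>i\<le>k. fst (\<omega> i)) = Sm \<omega> (Suc k)"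
  unfolding Sm_def lessThan_Suc_atMost ..

lemma njumps_eq:
  assumes pos: "\<And>n. 0 \<le> fst (\<omega> n)" and a: "m = 0 \<or> Sm \<omega> m \<le> s" and b: "s < Sm \<omega> (Suc m)"
  shows "njumps \<omega> s = m"
proof -
  have "{k. (\<Sum>i\<le>k. fst (\<omega> i)) \<le> s} = {..<m}"
  proof (intro set_eqI iffI)
    fix k assume "k \<in> {k. (\<Sum>i\<le>k. fst (\<omega> i)) \<le> s}"
    then have "Sm \<omega> (Suc k) \<le> s" by (simp add: sum_atMost_Sm)
    moreover have "\<not> m \<le> k \<Longrightarrow> k < m" by simp
    moreover have "m \<le> k \<Longrightarrow> Sm \<omega> (Suc m) \<le> Sm \<omega> (Suc k)" by (rule Sm_mono[OF pos]) simp
    ultimately show "k \<in> {..<m}" using b by force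
  next
    fix k assume "k \<in> {..<m}"
    then have "Sm \<omega> (Suc k) \<le> Sm \<omega> m" "m \<noteq> 0" by (auto intro!: Sm_mono[OF pos])
    then show "k \<in> {k. (\<Sum>i\<le>k. fst (\<omega> i)) \<le> s}" using a by (simp add: sum_atMost_Sm)
  qed
  then show ?thesis unfolding njumps_def by simp
qed

lemma njumps_pre:
  assumes pos: "\<And>n. 0 \<le> fst (\<omega> n)"
  shows "{s. njumps \<omega> s = m} = {s. (m = 0 \<or> Sm \<omega> m \<le> s) \<and> s < Sm \<omega> (Suc m)} \<union> {s. m = 0 \<and> (\<forall>k. Sm \<omega> (Suc k) \<le> s)}"
proof (intro set_eqI iffI)
  fix s assume "s \<in> {s. njumps \<omega> s = m}"
  then have nj: "njumps \<omega> s = m" by simp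
  show "s \<in> {s. (m = 0 \<or> Sm \<omega> m \<le> s) \<and> s < Sm \<omega> (Suc m)} \<union> {s. m = 0 \<and> (\<forall>k. Sm \<omega> (Suc k) \<le> s)}"
  proof (cases "\<forall>k. Sm \<omega> (Suc k) \<le> s")
    case True
    then have "{k. (\<Sum>i\<le>k. fst (\<omega> i)) \<le> s} = UNIV" by (simp add: sum_atMost_Sm)
    then have "m = 0" using nj unfolding njumps_def by simp
    then show ?thesis using True by simp
  next
    case False
    define j where "j = (LEAST k. s < Sm \<omega> (Suc k))"
    have ex: "\<exists>k. s < Sm \<omega> (Suc k)" using False by (simp add: not_le)
    have j1: "s < Sm \<omega> (Suc j)" unfolding j_def using LeastI_ex[OF ex] .
    have j2: "k < j \<Longrightarrow> Sm \<omega> (Suc k) \<le> s" for k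
      using not_less_Least[of k "\<lambda>k. s < Sm \<omega> (Suc k)"] unfolding j_def by simp
    have ja: "j = 0 \<or> Sm \<omega> j \<le> s"
      using j2[of "j - 1"] by (cases j) auto
    have "njumps \<omega> s = j" by (rule njumps_eq[OF pos ja j1])
    then have "m = j" using nj by simp
    then show ?thesis using ja j1 by simp
  qed
next
  fix s assume "s \<in> {s. (m = 0 \<or> Sm \<omega> m \<le> s) \<and> s < Sm \<omega> (Suc m)} \<union> {s. m = 0 \<and> (\<forall>k. Sm \<omega> (Suc k) \<le> s)}"
  then show "s \<in> {s. njumps \<omega> s = m}"
  proof
    assume "s \<in> {s. (m = 0 \<or> Sm \<omega> m \<le> s) \<and> s < Sm \<omega> (Suc m)}"
    then show ?thesis using njumps_eq[OF pos] by simp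
  next
    assume "s \<in> {s. m = 0 \<and> (\<forall>k. Sm \<omega> (Suc k) \<le> s)}"
    then have "{k. (\<Sum>i\<le>k. fst (\<omega> i)) \<le> s} = UNIV" "m = 0" by (auto simp: sum_atMost_Sm)
    then show ?thesis unfolding njumps_def by simp
  qed
qed

lemma njumps_meas:
  assumes pos: "\<And>n. 0 \<le> fst (\<omega> n)"
  shows "njumps \<omega> \<in> borel \<rightarrow>\<^sub>M count_space UNIV"
proof (subst measurable_count_space_eq2_countable, safe)
  fix m :: nat
  have "njumps \<omega> -` {m} \<inter> space borel = {s. njumps \<omega> s = m}" by auto
  also have "\<dots> = {s. (m = 0 \<or> Sm \<omega> m \<le> s) \<and> s < Sm \<omega> (Suc m)} \<union> {s. m = 0 \<and> (\<forall>k. Sm \<omega> (Suc k) \<le> s)}"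
    by (rule njumps_pre[OF pos])
  also have "\<dots> \<in> sets borel"
  proof (intro sets.Un)
    have "{s::real. (m = 0 \<or> Sm \<omega> m \<le> s) \<and> s < Sm \<omega> (Suc m)} = {s \<in> space borel. (m = 0 \<or> Sm \<omega> m \<le> s) \<and> s < Sm \<omega> (Suc m)}" by simp
    also have "\<dots> \<in> sets borel" by measurable
    finally show "{s::real. (m = 0 \<or> Sm \<omega> m \<le> s) \<and> s < Sm \<omega> (Suc m)} \<in> sets borel" .
    have "{s::real. m = 0 \<and> (\<forall>k. Sm \<omega> (Suc k) \<le> s)} = {s \<in> space borel. m = 0 \<and> (\<forall>k. Sm \<omega> (Suc k) \<le> s)}" by simp
    also have "\<dots> \<in> sets borel" by measurable
    finally show "{s::real. m = 0 \<and> (\<forall>k. Sm \<omega> (Suc k) \<le> s)} \<in> sets borel" .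
  qed
  finally show "njumps \<omega> -` {m} \<inter> space borel \<in> sets borel" .
qed simp

lemma Tstar_nonneg: "0 \<le> Tstar N x t \<omega>"
  unfolding Tstar_def set_lebesgue_integral_def by (rule integral_nonneg_AE) (auto simp: indicator_def)

lemma Sm_unique:
  assumes pos: "\<And>n. 0 \<le> fst (\<omega> n)"
    and "Sm \<omega> a \<le> s" "s < Sm \<omega> (Suc a)" "Sm \<omega> b \<le> s" "s < Sm \<omega> (Suc b)"
  shows "a = b"
proof (rule ccontr)
  assume "a \<noteq> b"
  then consider "Suc a \<le> b" | "Suc b \<le> a" by linarith
  then show False
  proof cases
    case 1 then show False using Sm_mono[of \<omega>, OF pos 1] assms by simp
  next
    case 2 then show False using Sm_mono[of \<omega>, OF pos 2] assms by simp
  qed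
qed

lemma Tstar_ge:
  assumes pos: "\<And>n. 0 \<le> fst (\<omega> n)" and SM: "Sm \<omega> M \<le> t"
  shows "(\<Sum>n<M. fst (\<omega> n) * bdi N (jump_chain N x \<omega> n)) \<le> Tstar N x t \<omega>"
proof -
  define g where "g s = (if walk_pos N x \<omega> s = int N \<or> walk_pos N x \<omega> s = - int N then 1 else (0::real))" for s
  define l where "l s = (\<Sum>n<M. bdi N (jump_chain N x \<omega> n) * indicator {Sm \<omega> n..<Sm \<omega> (Suc n)} s)" for s
  have gm: "g \<in> borel_measurable borel"
  proof -
    have "(\<lambda>s. (\<lambda>m. if jump_chain N x \<omega> m = int N \<or> jump_chain N x \<omega> m = - int N then 1 else (0::real)) (njumps \<omega> s)) \<in> borel_measurable borel"
      by (rule measurable_compose[OF njumps_meas[of \<omega>, OF pos]]) simp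
    then show ?thesis unfolding g_def walk_pos_def .
  qed
  have int1: "integrable lborel (\<lambda>s. indicator {0..t} s *\<^sub>R g s)"
  proof -
    have i: "integrable lborel (indicator {0..t} :: real \<Rightarrow> real)"
      by (cases "0 \<le> t") (simp_all add: integrable_indicator_iff)
    have m: "(\<lambda>s. indicator {0..t} s *\<^sub>R g s) \<in> borel_measurable lborel"
      using gm by measurable
    have ae: "AE s in lborel. norm (indicator {0..t} s *\<^sub>R g s) \<le> norm (indicator {0..t} s :: real)"
      by (auto simp: g_def indicator_def)
    show ?thesis using Bochner_Integration.integrable_bound[OF i m ae] .
  qed
  have fin: "emeasure lborel {a..<b} < \<top>" for a b :: real
    by (cases "a \<le> b") auto
  have lsum: "integral\<^sup>L lborel l = (\<Sum>n<M. fst (\<omega> n) * bdi N (jump_chain N x \<omega> n))"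
  proof -
    have "integral\<^sup>L lborel l = (\<Sum>n<M. integral\<^sup>L lborel (\<lambda>s. bdi N (jump_chain N x \<omega> n) * indicator {Sm \<omega> n..<Sm \<omega> (Suc n)} s))"
      unfolding l_def by (rule Bochner_Integration.integral_sum) (auto simp: integrable_indicator_iff fin)
    also have "\<dots> = (\<Sum>n<M. bdi N (jump_chain N x \<omega> n) * (Sm \<omega> (Suc n) - Sm \<omega> n))"
      using Sm_mono[of \<omega>, OF pos] by (intro sum.cong refl) auto
    also have "\<dots> = (\<Sum>n<M. fst (\<omega> n) * bdi N (jump_chain N x \<omega> n))"
      by (intro sum.cong refl) (simp add: Sm_def)
    finally show ?thesis .
  qed
  have int2: "integrable lborel l"
    unfolding l_def
    by (rule Bochner_Integration.integrable_sum, rule integrable_mult_right) (simp add: integrable_indicator_iff fin)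
  have pw: "l s \<le> indicator {0..t} s *\<^sub>R g s" for s
  proof (cases "\<exists>n<M. Sm \<omega> n \<le> s \<and> s < Sm \<omega> (Suc n)")
    case True
    then obtain n0 where n0: "n0 < M" "Sm \<omega> n0 \<le> s" "s < Sm \<omega> (Suc n0)" by blast
    have "l s = (\<Sum>n<M. if n = n0 then bdi N (jump_chain N x \<omega> n0) else 0)"
      unfolding l_def
    proof (intro sum.cong refl)
      fix n assume "n \<in> {..<M}"
      show "bdi N (jump_chain N x \<omega> n) * indicator {Sm \<omega> n..<Sm \<omega> (Suc n)} s
          = (if n = n0 then bdi N (jump_chain N x \<omega> n0) else 0)"
      proof (cases "n = n0")
        case True then show ?thesis using n0 by (simp add: indicator_def)
      next
        case False
        have "s \<notin> {Sm \<omega> n..<Sm \<omega> (Suc n)}"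
        proof
          assume "s \<in> {Sm \<omega> n..<Sm \<omega> (Suc n)}"
          then have "n = n0" using Sm_unique[of \<omega>, OF pos _ _ n0(2,3), of n] by simp
          then show False using False by simp
        qed
        then show ?thesis using False by simp
      qed
    qed
    also have "\<dots> = bdi N (jump_chain N x \<omega> n0)" using n0(1) by simp
    finally have ls: "l s = bdi N (jump_chain N x \<omega> n0)" .
    have "0 \<le> s" using Sm_nonneg[of \<omega>, OF pos, of n0] n0 by simp
    moreover have "s \<le> t" using Sm_mono[of \<omega>, OF pos, of "Suc n0" M] n0 SM by simp
    moreover have "njumps \<omega> s = n0" using njumps_eq[of \<omega>, OF pos _ n0(3)] n0(2) by simp
    ultimately show ?thesis unfolding ls g_def walk_pos_def by (simp add: bdi_def)
  next
    case False
    have "l s = 0" unfolding l_def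
    proof (intro sum.neutral ballI)
      fix n assume "n \<in> {..<M}"
      then have "s \<notin> {Sm \<omega> n..<Sm \<omega> (Suc n)}" using False by auto
      then show "bdi N (jump_chain N x \<omega> n) * indicator {Sm \<omega> n..<Sm \<omega> (Suc n)} s = 0" by simp
    qed
    then show ?thesis by (simp add: g_def indicator_def)
  qed
  have "integral\<^sup>L lborel l \<le> integral\<^sup>L lborel (\<lambda>s. indicator {0..t} s *\<^sub>R g s)"
    by (rule Bochner_Integration.integral_mono[OF int2 int1 pw])
  then show ?thesis unfolding lsum Tstar_def set_lebesgue_integral_def g_def .
qed

lemma Fw2_eq: "(\<And>n. 0 \<le> fst (\<omega> n)) \<Longrightarrow> Fw N phi2 (\<lambda>_. 1) M x \<omega> = exp (Sm \<omega> M / 2)"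
  unfolding Fw_def phi2_def Sm_def
  by (simp add: exp_sum[symmetric] sum_divide_distrib max_absorb1)

lemma Fw1_eq: "(\<And>n. 0 \<le> fst (\<omega> n)) \<Longrightarrow> Fw N (phi1 N) (H1 N) M x \<omega>
    = exp (- (\<Sum>n<M. fst (\<omega> n) * bdi N (jump_chain N x \<omega> n))) * H1 N (jump_chain N x \<omega> M)"
  unfolding Fw_def phi1_def
  by (simp add: exp_sum[symmetric] sum_negf max_absorb1)

lemma pathwise:
  assumes pos: "\<And>n. 0 \<le> fst (\<omega> n)" and N: "1 \<le> N" and x: "- int N \<le> x" "x \<le> int N"
  shows "exp (- Tstar N x t \<omega>) \<le> Fw N (phi1 N) (H1 N) M x \<omega> / (2 * real N ^ 2)
            + exp (- t / 2) * Fw N phi2 (\<lambda>_. 1) M x \<omega>"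
proof -
  have Npos: "0 < 2 * real N ^ 2" using N by simp
  have F1nn: "0 \<le> Fw N (phi1 N) (H1 N) M x \<omega> / (2 * real N ^ 2)"
    unfolding Fw_def phi1_def H1_def by (intro divide_nonneg_pos Npos mult_nonneg_nonneg prod_nonneg) auto
  have F2nn: "0 \<le> exp (- t / 2) * Fw N phi2 (\<lambda>_. 1) M x \<omega>"
    using Fw2_eq[of \<omega>, OF pos] by simp
  show ?thesis
  proof (cases "Sm \<omega> M \<le> t")
    case True
    let ?A = "\<Sum>n<M. fst (\<omega> n) * bdi N (jump_chain N x \<omega> n)"
    have "exp (- Tstar N x t \<omega>) \<le> exp (- ?A)"
      using Tstar_ge[of \<omega>, OF pos True] by simp
    also have "\<dots> = exp (- ?A) * (2 * real N ^ 2) / (2 * real N ^ 2)" using Npos by simp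
    also have "\<dots> \<le> exp (- ?A) * H1 N (jump_chain N x \<omega> M) / (2 * real N ^ 2)"
      using H1_ge[OF jc_range[OF x, THEN conjunct1] jc_range[OF x, THEN conjunct2]] Npos
      by (intro divide_right_mono mult_left_mono) auto
    also have "\<dots> = Fw N (phi1 N) (H1 N) M x \<omega> / (2 * real N ^ 2)"
      using Fw1_eq[of \<omega>, OF pos] by simp
    finally show ?thesis using F2nn by simp
  next
    case False
    have "exp (- Tstar N x t \<omega>) \<le> 1" using Tstar_nonneg by simp
    also have "1 \<le> exp (- t / 2) * exp (Sm \<omega> M / 2)"
      using False by (simp add: mult_exp_exp)
    also have "\<dots> = exp (- t / 2) * Fw N phi2 (\<lambda>_. 1) M x \<omega>"
      using Fw2_eq[of \<omega>, OF pos] by simp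
    finally show ?thesis using F1nn by simp
  qed
qed

lemma AE_pos: "AE \<omega> in walk_space. \<forall>n. 0 \<le> fst (\<omega> n)"
proof -
  have "AE \<omega> in walk_space. 0 \<le> fst (\<omega> n)" for n
  proof -
    have c: "(\<lambda>\<omega>. \<omega> n) \<in> walk_space \<rightarrow>\<^sub>M step_meas"
      unfolding walk_space_def by (rule measurable_component_singleton) simp
    have d: "distr walk_space step_meas (\<lambda>\<omega>. \<omega> n) = step_meas"
      unfolding W_eq by (rule SS.PiM_component) simp
    have e: "AE s in exp_meas. 0 \<le> s"
      unfolding exp_meas_def by (subst AE_density) (auto simp: exponential_density_def)
    interpret E: prob_space exp_meas by (rule prob_exp)
    interpret B: prob_space "measure_pmf (bernoulli_pmf (1/2))" by (rule prob_space_measure_pmf)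
    interpret P: pair_prob_space exp_meas "measure_pmf (bernoulli_pmf (1/2))" ..
    have sm: "{s \<in> space step_meas. 0 \<le> fst s} \<in> sets step_meas"
      using meas_fstfun[of "\<lambda>x. x"] by measurable
    have "AE s in step_meas. 0 \<le> fst s"
      unfolding step_meas_def
      by (rule P.AE_pair_measure) (use sm e in \<open>auto simp: step_meas_def\<close>)
    then have "AE s in distr walk_space step_meas (\<lambda>\<omega>. \<omega> n). 0 \<le> fst s" unfolding d .
    then show ?thesis by (subst (asm) AE_distr_iff[OF c sm])
  qed
  then show ?thesis by (simp add: AE_all_countable)
qed

lemma final_real:
  fixes n t h :: real and M :: nat
  assumes n: "1 \<le> n" and t: "0 \<le> t" and M: "M = nat \<lfloor>t / 4\<rfloor>" and h: "0 \<le> h" "h \<le> 3 * n^2"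
  shows "(1 - 1 / (3 * n^2))^M * h / (2 * n^2) + exp (- t / 2) * 2^M \<le> 6 * exp (- (1/12) * t / n^2)"
proof -
  define a where "a = 1 / (3 * n^2)"
  define E where "E = exp (- (1/12) * t / n^2)"
  have n2: "1 \<le> n^2" using n by (simp add: one_le_power)
  have a0: "0 < a" "a \<le> 1/3" using n2 unfolding a_def by (auto simp: divide_le_eq_1)
  have Mle: "real M \<le> t / 4" and Mge: "t / 4 - 1 \<le> real M"
    using t unfolding M by linarith+
  have "(1 - a)^M \<le> exp (- a)^M"
    using a0 exp_ge_add_one_self[of "-a"] by (intro power_mono) auto
  also have "\<dots> = exp (- a * real M)" by (simp add: exp_of_nat_mult[symmetric] mult.commute)
  also have "\<dots> \<le> exp (- a * (t / 4 - 1))" using Mge a0 by (intro exp_mono) (simp add: mult_left_mono)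
  also have "\<dots> = exp (a + (- (1/12) * t / n^2))"
    using n2 unfolding a_def by (intro arg_cong[where f=exp]) (simp add: diff_divide_distrib)
  also have "\<dots> = exp a * E"
    unfolding E_def by (rule exp_add)
  also have "\<dots> \<le> 3 * E"
  proof -
    have "exp a \<le> exp 1" using a0 by simp
    then have "exp a \<le> 3" using exp_le by linarith
    then show ?thesis unfolding E_def by (intro mult_right_mono) auto
  qed
  finally have p1: "(1 - a)^M \<le> 3 * E" .
  have hh: "h / (2 * n^2) \<le> 3/2"
  proof -
    have p: "0 < 2 * n^2" using n by simp
    show ?thesis unfolding divide_le_eq using p h by simp
  qed
  have "(1 - a)^M * h / (2 * n^2) = (1 - a)^M * (h / (2 * n^2))" by simp
  also have "\<dots> \<le> (3 * E) * (3/2)"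
    using p1 hh h n2 a0 by (intro mult_mono) (auto simp: E_def)
  finally have t1: "(1 - a)^M * h / (2 * n^2) \<le> 9/2 * E" by simp
  have "(2::real)^M \<le> exp 1 ^ M"
    using exp_ge_add_one_self[of 1] by (intro power_mono) auto
  also have "\<dots> = exp (real M)" by (simp add: exp_of_nat_mult[symmetric])
  finally have "exp (- t / 2) * 2^M \<le> exp (- t / 2) * exp (real M)" by simp
  also have "\<dots> \<le> exp (- t / 4)" using Mle by (simp add: mult_exp_exp)
  also have "\<dots> \<le> E"
  proof -
    have "t / (12 * n^2) \<le> t / 4" using t n2 by (intro divide_left_mono) auto
    then show ?thesis unfolding E_def by simp
  qed
  finally have t2: "exp (- t / 2) * 2^M \<le> E" .
  have E0: "0 \<le> E" unfolding E_def by simp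
  show ?thesis using t1 t2 E0 unfolding a_def E_def by linarith
qed

lemma main_bound:
  assumes N: "0 < N" and x: "- int N \<le> x" "x \<le> int N" and t: "0 \<le> t"
  shows "(\<integral>\<omega>. exp (- Tstar N x t \<omega>) \<partial>walk_space) \<le> 6 * exp (- (1/12) * t / (real N)^2)"
proof (cases "(\<lambda>\<omega>. exp (- Tstar N x t \<omega>)) \<in> borel_measurable walk_space")
  case False
  then have "\<not> integrable walk_space (\<lambda>\<omega>. exp (- Tstar N x t \<omega>))" by auto
  then show ?thesis by (simp add: not_integrable_integral_eq)
next
  case True
  have N1: "1 \<le> N" using N by simp
  define M where "M = nat \<lfloor>t / 4\<rfloor>"
  define q where "q = 1 - 1 / (3 * real N ^ 2)"
  have q0: "0 \<le> q"
  proof -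
    have "1 \<le> real N ^ 2" using N1 by (simp add: one_le_power)
    then have "1 \<le> 3 * real N ^ 2" by linarith
    then show ?thesis unfolding q_def by (auto simp: divide_le_eq_1)
  qed
  define F1 where "F1 = Fw N (phi1 N) (H1 N) M x"
  define F2 where "F2 = Fw N phi2 (\<lambda>_. 1) M x"
  define R where "R = q^M * H1 N x / (2 * real N ^ 2) + exp (- t / 2) * 2^M"
  have mphi1: "phi1 N y \<in> borel_measurable step_meas" for y
    unfolding phi1_def by (rule meas_fstfun) simp
  have mphi2: "phi2 y \<in> borel_measurable step_meas" for y
    unfolding phi2_def by (rule meas_fstfun) simp
  have mF1: "F1 \<in> borel_measurable walk_space" unfolding F1_def by (rule Fw_meas[OF mphi1])
  have mF2: "F2 \<in> borel_measurable walk_space" unfolding F2_def by (rule Fw_meas[OF mphi2])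
  have I1: "(\<integral>\<^sup>+\<omega>. ennreal (F1 \<omega>) \<partial>walk_space) \<le> ennreal (q^M * H1 N x)"
    unfolding F1_def
    by (rule iter[OF mphi1 _ _ q0 bound1[OF N1, folded q_def] x]) (auto simp: phi1_def H1_def)
  have I2: "(\<integral>\<^sup>+\<omega>. ennreal (F2 \<omega>) \<partial>walk_space) \<le> ennreal (2^M * 1)"
    unfolding F2_def
    by (rule iter[OF mphi2 _ _ _ bound2 x]) (auto simp: phi2_def)
  have F1nn: "0 \<le> F1 \<omega>" for \<omega>
    unfolding F1_def Fw_def phi1_def H1_def by (intro mult_nonneg_nonneg prod_nonneg) auto
  have F2nn: "0 \<le> F2 \<omega>" for \<omega>
    unfolding F2_def Fw_def phi2_def by (intro mult_nonneg_nonneg prod_nonneg) auto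
  have Npos: "0 < 2 * real N ^ 2" using N by simp
  have "(\<integral>\<^sup>+\<omega>. ennreal (exp (- Tstar N x t \<omega>)) \<partial>walk_space)
      \<le> (\<integral>\<^sup>+\<omega>. ennreal (1 / (2 * real N ^ 2)) * ennreal (F1 \<omega>) + ennreal (exp (- t / 2)) * ennreal (F2 \<omega>) \<partial>walk_space)"
  proof (rule nn_integral_mono_AE)
    show "AE \<omega> in walk_space. ennreal (exp (- Tstar N x t \<omega>))
        \<le> ennreal (1 / (2 * real N ^ 2)) * ennreal (F1 \<omega>) + ennreal (exp (- t / 2)) * ennreal (F2 \<omega>)"
      using AE_pos
    proof eventually_elim
      case (elim \<omega>)
      have "exp (- Tstar N x t \<omega>) \<le> 1 / (2 * real N ^ 2) * F1 \<omega> + exp (- t / 2) * F2 \<omega>"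
        using pathwise[of \<omega>, OF _ N1 x, of t M] elim unfolding F1_def F2_def by simp
      then show ?case using F1nn[of \<omega>] F2nn[of \<omega>] Npos
        by (simp add: ennreal_mult'[symmetric] ennreal_plus[symmetric] del: ennreal_plus)
    qed
  qed
  also have "\<dots> = ennreal (1 / (2 * real N ^ 2)) * (\<integral>\<^sup>+\<omega>. ennreal (F1 \<omega>) \<partial>walk_space)
      + ennreal (exp (- t / 2)) * (\<integral>\<^sup>+\<omega>. ennreal (F2 \<omega>) \<partial>walk_space)"
    using mF1 mF2 by (simp add: nn_integral_add nn_integral_cmult)
  also have "\<dots> \<le> ennreal (1 / (2 * real N ^ 2)) * ennreal (q^M * H1 N x) + ennreal (exp (- t / 2)) * ennreal (2^M * 1)"
    by (intro add_mono mult_left_mono I1 I2) auto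
  also have "\<dots> = ennreal R"
    unfolding R_def using q0 Npos
    by (simp add: ennreal_mult'[symmetric] ennreal_plus[symmetric] H1_def del: ennreal_plus)
  finally have nn: "(\<integral>\<^sup>+\<omega>. ennreal (exp (- Tstar N x t \<omega>)) \<partial>walk_space) \<le> ennreal R" .
  have "(\<integral>\<omega>. exp (- Tstar N x t \<omega>) \<partial>walk_space) = enn2real (\<integral>\<^sup>+\<omega>. ennreal (exp (- Tstar N x t \<omega>)) \<partial>walk_space)"
    by (rule integral_eq_nn_integral[OF True]) simp
  also have "\<dots> \<le> R"
    by (rule enn2real_leI[OF _ nn]) (use q0 Npos in \<open>simp add: R_def H1_def\<close>)
  also have "R \<le> 6 * exp (- (1/12) * t / (real N)^2)"
  proof -
    have h: "0 \<le> H1 N x" "H1 N x \<le> 3 * real N ^ 2"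
      using H1_eq[OF x] by (auto simp: H1_def)
    show ?thesis unfolding R_def q_def
      by (rule final_real[OF _ t M_def h]) (use N1 in simp)
  qed
  finally show ?thesis .
qed

theorem mainTheorem3:
  shows "\<exists>c b :: real. b > 0 \<and>
    (\<forall>N::nat. N > 0 \<longrightarrow> (\<forall>x::int. - int N \<le> x \<and> x \<le> int N \<longrightarrow>
      (\<forall>t::real. t \<ge> 0 \<longrightarrow>
        (\<integral>\<omega>. exp (- Tstar N x t \<omega>) \<partial>walk_space) \<le> c * exp (- b * t / (real N)^2))))"
proof -
  have "\<forall>N::nat. N > 0 \<longrightarrow> (\<forall>x::int. - int N \<le> x \<and> x \<le> int N \<longrightarrow>
      (\<forall>t::real. t \<ge> 0 \<longrightarrow>
        (\<integral>\<omega>. exp (- Tstar N x t \<omega>) \<partial>walk_space) \<le> 6 * exp (- (1/12) * t / (real N)^2)))"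
    using main_bound by blast
  then show ?thesis
    by (intro exI[of _ "6::real"] exI[of _ "1/12::real"] conjI) simp_all
qed

end
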